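(* Let $n\ge2$ and $1\le p<n$. Let $\varphi$ satisfy conditions (1)–(5) and assume $\lim_{t\to0^+}t/\varphi(t)=m<\infty$. Let $G\subset\mathbb R^n$ be the mushroom domain described below. Assume that there exist $q\in[1,\infty)$ and $C\in\mathbb R$ such that $$\inf_{b\in\mathbb R}\|u-b\|_{L^q(G)}\le C\|\nabla u\|_{L^p(G)}$$ holds for all $u\in L^1_p(G)$. Then $q=\frac{np}{n-p}$, and there exists $t_0>0$ such that $\varphi(t)\approx t$ for all $t\in(0,t_0]$.
   Context: Conditions on $\varphi:[0,\infty)\to[0,\infty)$: (1) continuous; (2) strictly increasing; (3) $\varphi(0)=\lim_{t\to0^+}\varphi(t)=0$; (4) there is $C_\varphi\ge1$ with $\varphi(t_1)/t_1\le C_\varphi\varphi(t_2)/t_2$ whenever $0<t_1\le t_2$; (5) there is $C^{\Delta_2}_\varphi\ge1$ with $\varphi(2t)\le C^{\Delta_2}_\varphi\varphi(t)$ for all $t>0$. $\varphi(t)\approx t$ on $(0,t_0]$ means there are constants $0<c_1\le c_2$ with $c_1t\le\varphi(t)\le c_2t$ there. Mushroom domain: Let $(r_m)_{m\ge1}$ be a decreasing sequence of positive numbers converging to $0$ with $\varphi(r_m)\le r_m$ for all $m$. Let $Q=\{x\in\mathbb R^n: x_i>0\text{ for all }i\}$. For each $m$, let $Q_m$ be a closed cube of side length $2r_m$ and $P_m$ a closed rectangular box with one side of length $r_m$ and the remaining $n-1$ sides of length $2\varphi(r_m)$. Each $P_m$ is placed outside $Q$ with one of its faces of size $(2\varphi(r_m))^{n-1}$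 lying in the face $\{x_1=0,\ x_2,\dots,x_n>0\}$ of $Q$ (its side of length $r_m$ perpendicular to that face), and the cube $Q_m$ is attached to the opposite face of $P_m$, forming a "mushroom" $Q_m\cup P_m$; the mushrooms are pairwise disjoint and each has distance at least $1$ and at most $4$ from the origin. Let $Q_m^*,P_m^*$ be images of $Q_m,P_m$ under an isometry moving them onto the face $\{x_2=0,\ x_1,x_3,\dots,x_n>0\}$ of $Q$ in the same way (pairwise disjoint, at distance between $1$ and $4$ from the origin). Set $G=\operatorname{int}\big(Q\cup\bigcup_{m=1}^\infty(Q_m\cup P_m\cup Q_m^*\cup P_m^* )\big)$. $L^1_p(G)=\{u\in L^1_{loc}(G):|\nabla u|\in L^p(G)\}$. *)

theory Defs
  imports "HOL-Analysis.Analysis"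
begin

definition admissible_phi :: "(real \<Rightarrow> real) \<Rightarrow> bool" where
  "admissible_phi \<phi> \<longleftrightarrow>
     (\<forall>t\<ge>0. \<phi> t \<ge> 0) \<and>
     continuous_on {0..} \<phi> \<and>
     strict_mono_on {0..} \<phi> \<and>
     \<phi> 0 = 0 \<and> (\<phi> \<longlongrightarrow> 0) (at_right 0) \<and>
     (\<exists>C\<ge>1. \<forall>t1 t2. 0 < t1 \<and> t1 \<le> t2 \<longrightarrow> \<phi> t1 / t1 \<le> C * (\<phi> t2 / t2)) \<and>
     (\<exists>C\<ge>1. \<forall>t>0. \<phi> (2 * t) \<le> C * \<phi> t)"

fun Ck :: "nat \<Rightarrow> ('a::euclidean_space \<Rightarrow> real) \<Rightarrow> bool" where
  "Ck 0 f \<longleftrightarrow> continuous_on UNIV f"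
| "Ck (Suc k) f \<longleftrightarrow> (\<forall>x. f differentiable (at x)) \<and>
      (\<forall>i\<in>Basis. Ck k (\<lambda>x. frechet_derivative f (at x) i))"

definition smooth_fun :: "('a::euclidean_space \<Rightarrow> real) \<Rightarrow> bool" where
  "smooth_fun f \<longleftrightarrow> (\<forall>k. Ck k f)"

definition test_fun :: "'a::euclidean_space set \<Rightarrow> ('a \<Rightarrow> real) \<Rightarrow> bool" where
  "test_fun G \<psi> \<longleftrightarrow> smooth_fun \<psi> \<and> compact (closure {x. \<psi> x \<noteq> 0}) \<and>
     closure {x. \<psi> x \<noteq> 0} \<subseteq> G"

definition loc_integrable :: "'a::euclidean_space set \<Rightarrow> ('a \<Rightarrow> real) \<Rightarrow> bool" where
  "loc_integrable G u \<longleftrightarrow> (\<forall>K. compact K \<and> K \<subseteq> G \<longrightarrow> set_integrable lebesgue K u)"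

definition weak_gradient :: "'a::euclidean_space set \<Rightarrow> ('a \<Rightarrow> real) \<Rightarrow> ('a \<Rightarrow> 'a) \<Rightarrow> bool" where
  "weak_gradient G u g \<longleftrightarrow>
     (\<forall>i\<in>Basis. loc_integrable G (\<lambda>x. g x \<bullet> i)) \<and>
     (\<forall>\<psi> i. test_fun G \<psi> \<and> i \<in> Basis \<longrightarrow>
        (LINT x:G|lebesgue. u x * frechet_derivative \<psi> (at x) i)
          = - (LINT x:G|lebesgue. (g x \<bullet> i) * \<psi> x))"

definition Lnorm :: "real \<Rightarrow> 'a::euclidean_space set \<Rightarrow> ('a \<Rightarrow> real) \<Rightarrow> ereal" where
  "Lnorm q S f =
     (let I = (\<integral>\<^sup>+x\<in>S. ennreal (\<bar>f x\<bar> powr q) \<partial>lebesgue)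
      in if I = \<infinity> then \<infinity> else ereal ((enn2real I) powr (1 / q)))"

definition L1p :: "real \<Rightarrow> 'a::euclidean_space set \<Rightarrow> ('a \<Rightarrow> real) \<Rightarrow> ('a \<Rightarrow> 'a) \<Rightarrow> bool" where
  "L1p p G u g \<longleftrightarrow> loc_integrable G u \<and> weak_gradient G u g \<and>
     g \<in> borel_measurable (restrict_space lebesgue G) \<and>
     Lnorm p G (\<lambda>x. norm (g x)) < \<infinity>"

text \<open>A family of mushrooms Q_m \<union> P_m attached to the face {x. x\<bullet>e = 0, x\<bullet>i > 0 (i \<noteq> e)}
  of the positive orthant.  c is the lower corner of P_m's base, d that of the cube Q_m.\<close>
definition mushrooms_on_face ::
  "'a::euclidean_space \<Rightarrow> (real \<Rightarrow> real) \<Rightarrow> (nat \<Rightarrow> real) \<Rightarrow> (nat \<Rightarrow> 'a set) \<Rightarrow> (nat \<Rightarrow> 'a set) \<Rightarrow> bool" where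
  "mushrooms_on_face e \<phi> r Qs Ps \<longleftrightarrow>
     (\<forall>m. \<exists>c d::'a.
        Ps m = {x. - r m \<le> x \<bullet> e \<and> x \<bullet> e \<le> 0 \<and>
                   (\<forall>i\<in>Basis - {e}. c \<bullet> i \<le> x \<bullet> i \<and> x \<bullet> i \<le> c \<bullet> i + 2 * \<phi> (r m))} \<and>
        Qs m = {x. - 3 * r m \<le> x \<bullet> e \<and> x \<bullet> e \<le> - r m \<and>
                   (\<forall>i\<in>Basis - {e}. d \<bullet> i \<le> x \<bullet> i \<and> x \<bullet> i \<le> d \<bullet> i + 2 * r m)} \<and>
        (\<forall>i\<in>Basis - {e}. 0 < c \<bullet> i \<and> d \<bullet> i \<le> c \<bullet> i \<and> c \<bullet> i + 2 * \<phi> (r m) \<le> d \<bullet> i + 2 * r m)) \<and>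
     (\<forall>m m'. m \<noteq> m' \<longrightarrow> (Qs m \<union> Ps m) \<inter> (Qs m' \<union> Ps m') = {}) \<and>
     (\<forall>m. 1 \<le> infdist 0 (Qs m \<union> Ps m) \<and> infdist 0 (Qs m \<union> Ps m) \<le> 4)"

definition mushroom_domain ::
  "'a::euclidean_space \<Rightarrow> 'a \<Rightarrow> (real \<Rightarrow> real) \<Rightarrow> 'a set \<Rightarrow> bool" where
  "mushroom_domain e1 e2 \<phi> G \<longleftrightarrow>
     (\<exists>r Qs Ps Qs' Ps'.
        (\<forall>m. 0 < r m) \<and> decseq r \<and> r \<longlonglongrightarrow> 0 \<and> (\<forall>m. \<phi> (r m) \<le> r m) \<and>
        mushrooms_on_face e1 \<phi> r Qs Ps \<and> mushrooms_on_face e2 \<phi> r Qs' Ps' \<and>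
        G = interior ({x. \<forall>i\<in>Basis. 0 < x \<bullet> i} \<union>
              (\<Union>m. Qs m \<union> Ps m \<union> Qs' m \<union> Ps' m)))"

end

theory Submission
  imports Defs
begin

lemma phi_approx:
  fixes \<phi> :: "real \<Rightarrow> real" and m :: real and r :: "nat \<Rightarrow> real"
  assumes adm: "admissible_phi \<phi>"
    and lim: "((\<lambda>t. t / \<phi> t) \<longlongrightarrow> m) (at_right 0)"
    and rpos: "\<forall>k. 0 < r k" and rlim: "r \<longlonglongrightarrow> 0" and rle: "\<forall>k. \<phi> (r k) \<le> r k"
  shows "\<exists>t0>0. \<exists>c1 c2. 0 < c1 \<and> c1 \<le> c2 \<and>
            (\<forall>t\<in>{0<..t0}. c1 * t \<le> \<phi> t \<and> \<phi> t \<le> c2 * t)"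
proof -
  have sm: "strict_mono_on {0..} \<phi>" and p0: "\<phi> 0 = 0" using adm unfolding admissible_phi_def by auto
  have pos: "\<phi> t > 0" if "t > 0" for t
    using strict_mono_onD[OF sm, of 0 t] that p0 by auto
  have rr: "filterlim r (at_right 0) sequentially"
    using rlim rpos by (auto simp: filterlim_at intro!: always_eventually) (metis less_irrefl)
  have "(\<lambda>k. r k / \<phi> (r k)) \<longlonglongrightarrow> m"
    using filterlim_compose[OF lim rr] by (simp add: o_def)
  moreover have "\<forall>k. 1 \<le> r k / \<phi> (r k)"
    using rle rpos pos by (simp add: divide_simps)
  ultimately have m1: "m \<ge> 1"
    by (intro LIMSEQ_le_const[of _ m]) auto
  have "eventually (\<lambda>t. t / \<phi> t \<in> {m/2<..<2*m}) (at_right 0)"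
    using lim m1 by (intro topological_tendstoD) auto
  moreover have "eventually (\<lambda>t. t > (0::real)) (at_right 0)" by (rule eventually_at_right_less)
  ultimately have "eventually (\<lambda>t. t > 0 \<and> t / \<phi> t \<in> {m/2<..<2*m}) (at_right 0)"
    by (rule eventually_conj[rotated])
  then have "\<exists>b>0. \<forall>t>0. t < b \<longrightarrow> (t > 0 \<and> t / \<phi> t \<in> {m/2<..<2*m})"
    using eventually_at_right[of "0::real" 1] by simp
  then obtain b where b: "b > 0" and hb: "\<And>t. 0 < t \<Longrightarrow> t < b \<Longrightarrow> t / \<phi> t \<in> {m/2<..<2*m}"
    by blast
  have "\<forall>t\<in>{0<..b/2}. 1 / (2 * m) * t \<le> \<phi> t \<and> \<phi> t \<le> 2 / m * t"
  proof
    fix t assume t: "t \<in> {0<..b/2}"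
    then have "t / \<phi> t \<in> {m/2<..<2*m}" using hb b by auto
    moreover have "\<phi> t > 0" using pos t by auto
    ultimately show "1 / (2 * m) * t \<le> \<phi> t \<and> \<phi> t \<le> 2 / m * t"
      using m1 by (auto simp: field_simps)
  qed
  moreover have "0 < 1 / (2 * m)" "1 / (2 * m) \<le> 2 / m" "b/2 > 0" using m1 b by (auto simp: field_simps)
  ultimately show ?thesis by blast
qed

lemma expo_zero:
  fixes e K :: real
  assumes "\<forall>s>0. s powr e \<le> K"
  shows "e = 0"
proof (rule ccontr)
  assume e: "e \<noteq> 0"
  define s where "s = (\<bar>K\<bar> + 1) powr (1/e)"
  have s: "s > 0" unfolding s_def by simp
  have "s powr e = (\<bar>K\<bar> + 1) powr (1/e * e)" unfolding s_def by (simp add: powr_powr)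
  also have "\<dots> = \<bar>K\<bar> + 1" using e by simp
  finally show False using assms s by force
qed

lemma dir_deriv:
  fixes f :: "'a::euclidean_space \<Rightarrow> real"
  assumes "(f has_derivative f') (at y)" and that: "y = x + t *\<^sub>R i"
  shows "((\<lambda>t. f (x + t *\<^sub>R i)) has_real_derivative f' i) (at t)"
proof -
  have l: "linear f'" using assms(1) by (rule has_derivative_linear)
  have "((\<lambda>t. x + t *\<^sub>R i) has_derivative (\<lambda>d. d *\<^sub>R i)) (at t)"
    by (auto intro!: derivative_eq_intros)
  from has_derivative_compose[OF this, of f f'] assms that
  have "((\<lambda>t. f (x + t *\<^sub>R i)) has_derivative (\<lambda>d. f' (d *\<^sub>R i))) (at t)" by simp
  moreover have "(\<lambda>d. f' (d *\<^sub>R i)) = (\<lambda>d. d * f' i)"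
    using l by (simp add: linear_scale)
  moreover have "(\<lambda>d. d * f' i) = (*) (f' i)" by (auto simp: fun_eq_iff)
  ultimately show ?thesis unfolding has_field_derivative_def by simp
qed

lemma ibp_zero:
  fixes f :: "'a::euclidean_space \<Rightarrow> real" and f' :: "'a \<Rightarrow> 'a \<Rightarrow> real"
  assumes der: "\<And>x. (f has_derivative f' x) (at x)"
    and cont: "continuous_on UNIV (\<lambda>x. f' x i)"
    and supp: "\<And>x. R < norm x \<Longrightarrow> f x = 0"
    and R: "0 \<le> R" and ni: "norm i = 1"
  shows "integral\<^sup>L lborel (\<lambda>x. f' x i) = 0"
proof -
  have fc: "continuous_on UNIV f"
    using der by (meson continuous_at_imp_continuous_on has_derivative_continuous)
  have f'0: "f' x i = 0" if "R < norm x" for x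
  proof -
    have "((\<lambda>_. 0) has_derivative f' x) (at x)"
      by (rule has_derivative_transform_within_open[OF der, of "{y. R < norm y}"])
        (use that supp in \<open>auto intro: open_Collect_less continuous_intros\<close>)
    then have "f' x = (\<lambda>_. 0)" using has_derivative_unique has_derivative_const by blast
    thus ?thesis by simp
  qed
  have "compact ((\<lambda>x. f' x i) ` cball 0 (R+2))"
    by (rule compact_continuous_image[OF continuous_on_subset[OF cont]]) auto
  then obtain M where M: "\<And>y. y \<in> cball 0 (R+2) \<Longrightarrow> \<bar>f' y i\<bar> \<le> M"
    using compact_imp_bounded bounded_iff by (metis image_eqI real_norm_def)
  define h where "h k = inverse (real (Suc k))" for k::nat
  define s where "s k x = (f (x + h k *\<^sub>R i) - f x) / h k" for k x
  have hpos: "0 < h k" "h k \<le> 1" for k unfolding h_def by (auto simp: field_simps)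
  have [measurable]: "f \<in> borel_measurable borel" using fc borel_measurable_continuous_onI by blast
  have [measurable]: "(\<lambda>x. f' x i) \<in> borel_measurable borel" using cont borel_measurable_continuous_onI by blast
  have eqf: "(\<lambda>x. indicator (cball 0 R) x *\<^sub>R f x) = f"
    by (auto simp: fun_eq_iff indicator_def supp)
  have "integrable lborel (\<lambda>x. indicator (cball 0 R) x *\<^sub>R f x)"
    by (rule borel_integrable_compact) (auto intro: continuous_on_subset[OF fc])
  then have int_f: "integrable lborel f" unfolding eqf .
  have transl: "integral\<^sup>L lborel (\<lambda>x. f (x + c)) = integral\<^sup>L lborel f"
    and int_shift: "integrable lborel (\<lambda>x. f (x + c))" for c
  proof -
    have "integral\<^sup>L lborel f = integral\<^sup>L (distr lborel borel ((+) c)) f" by (simp add: lborel_distr_plus)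
    also have "\<dots> = integral\<^sup>L lborel (\<lambda>x. f (c + x))" by (rule integral_distr) auto
    finally show "integral\<^sup>L lborel (\<lambda>x. f (x + c)) = integral\<^sup>L lborel f" by (simp add: add.commute)
    have "integrable (distr lborel borel ((+) c)) f" using int_f by (simp add: lborel_distr_plus)
    then have "integrable lborel (\<lambda>x. f (c + x))" by (subst (asm) integrable_distr_eq) auto
    then show "integrable lborel (\<lambda>x. f (x + c))" by (simp add: add.commute)
  qed
  have s_meas: "s k \<in> borel_measurable lborel" for k unfolding s_def by measurable
  have s_int0: "integral\<^sup>L lborel (s k) = 0" for k
    unfolding s_def using int_f int_shift transl by simp
  have lim: "(\<lambda>k. s k x) \<longlonglongrightarrow> f' x i" for x
  proof -
    have "((\<lambda>t. f (x + t *\<^sub>R i)) has_real_derivative f' x i) (at 0)"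
      by (rule dir_deriv[OF der]) simp
    then have "((\<lambda>t. (f (x + t *\<^sub>R i) - f x) / t) \<longlongrightarrow> f' x i) (at 0)"
      unfolding DERIV_def by simp
    moreover have "filterlim h (at 0) sequentially"
      unfolding filterlim_at h_def using LIMSEQ_inverse_real_of_nat by auto
    ultimately show ?thesis using filterlim_compose unfolding s_def by blast
  qed
  have bound: "\<bar>s k x\<bar> \<le> M * indicator (cball 0 (R+1)) x" for k x
  proof (cases "norm x \<le> R + 1")
    case False
    have "norm (x + h k *\<^sub>R i) \<ge> norm x - h k" using norm_triangle_ineq2[of x "- h k *\<^sub>R i"] hpos[of k] ni
      by (simp add: norm_minus_cancel)
    then have "f (x + h k *\<^sub>R i) = 0" "f x = 0" using False hpos[of k] by (auto intro!: supp)
    then show ?thesis using False by (simp add: s_def indicator_def)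
  next
    case True
    have "\<exists>z. 0 < z \<and> z < h k \<and> f (x + h k *\<^sub>R i) - f (x + 0 *\<^sub>R i) = (h k - 0) * f' (x + z *\<^sub>R i) i"
      by (rule MVT2[OF hpos(1)]) (rule dir_deriv[OF der], simp)
    then obtain z where z: "0 < z" "z < h k" "f (x + h k *\<^sub>R i) - f x = h k * f' (x + z *\<^sub>R i) i" by auto
    have "norm (x + z *\<^sub>R i) \<le> norm x + z" using norm_triangle_ineq[of x "z *\<^sub>R i"] ni z by simp
    then have "x + z *\<^sub>R i \<in> cball 0 (R+2)" using True z hpos[of k] by simp
    then have "\<bar>f' (x + z *\<^sub>R i) i\<bar> \<le> M" by (rule M)
    then show ?thesis using True z hpos[of k] by (simp add: s_def indicator_def)
  qed
  have fin: "emeasure lborel (cball 0 (R+1)) < \<infinity>"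
    by (rule emeasure_compact_finite) simp
  have "integrable lborel (\<lambda>x. M * indicator (cball 0 (R+1)) x)"
    by (intro integrable_mult_right integrable_real_indicator fin) simp
  then have "(\<lambda>k. integral\<^sup>L lborel (s k)) \<longlonglongrightarrow> integral\<^sup>L lborel (\<lambda>x. f' x i)"
    by (intro integral_dominated_convergence[where w="\<lambda>x. M * indicator (cball 0 (R+1)) x"])
       (use s_meas lim bound in auto)
  then show ?thesis using s_int0 LIMSEQ_unique[OF _ tendsto_const] by simp
qed

definition Hq :: "real \<Rightarrow> real" where "Hq t = (max 0 t)^2"

lemma Hq_deriv: "(Hq has_real_derivative 2 * max 0 t) (at t)"
proof (cases "t = 0")
  case True
  have eq: "(\<lambda>h. (Hq (0 + h) - Hq 0) / h) = (\<lambda>h. max 0 h)"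
    by (auto simp: fun_eq_iff Hq_def power2_eq_square max_def)
  have "((\<lambda>h. max 0 h) \<longlongrightarrow> max 0 (0::real)) (at 0)"
    by (intro tendsto_intros)
  have eq': "(\<lambda>h. (Hq h - Hq 0) / h) = (\<lambda>h. max 0 h)" using eq by simp
  then show ?thesis using True \<open>((\<lambda>h. max 0 h) \<longlongrightarrow> max 0 (0::real)) (at 0)\<close> unfolding DERIV_def by simp
next
  case False
  show ?thesis
  proof (cases "t > 0")
    case True
    have "((\<lambda>x. x^2) has_real_derivative 2 * max 0 t) (at t)" using True by (auto intro!: derivative_eq_intros)
    then show ?thesis
      by (rule has_field_derivative_transform_within_open[of _ _ _ "{0<..}"]) (use True in \<open>auto simp: Hq_def\<close>)
  next
    case f: False
    then have "t < 0" using False by simp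
    have "((\<lambda>x. 0) has_real_derivative 2 * max 0 t) (at t)" using \<open>t < 0\<close> by (auto intro!: derivative_eq_intros)
    then show ?thesis
      by (rule has_field_derivative_transform_within_open[of _ _ _ "{..<0}"]) (use \<open>t<0\<close> in \<open>auto simp: Hq_def\<close>)
  qed
qed

definition bump :: "real \<Rightarrow> 'a::euclidean_space \<Rightarrow> 'a \<Rightarrow> real" where
  "bump s x0 x = Hq (1 - (x - x0) \<bullet> (x - x0) / s^2)"

definition bumpg :: "real \<Rightarrow> 'a::euclidean_space \<Rightarrow> 'a \<Rightarrow> 'a" where
  "bumpg s x0 x = (- 4 * max 0 (1 - (x - x0) \<bullet> (x - x0) / s^2) / s^2) *\<^sub>R (x - x0)"

lemma bump_deriv: assumes "s > 0" shows "(bump s x0 has_derivative (\<lambda>v. bumpg s x0 x \<bullet> v)) (at x)"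
proof -
  have w: "((\<lambda>x. 1 - (x - x0) \<bullet> (x - x0) / s^2) has_derivative
      (\<lambda>v. - (v \<bullet> (x - x0) + (x - x0) \<bullet> v) / s^2)) (at x)"
    using \<open>s > 0\<close> by (auto intro!: derivative_eq_intros simp: field_simps fun_eq_iff power2_eq_square)
  have "(Hq has_derivative (\<lambda>d. d * (2 * max 0 (1 - (x - x0) \<bullet> (x - x0) / s^2)))) (at (1 - (x - x0) \<bullet> (x - x0) / s^2))"
    using Hq_deriv unfolding has_field_derivative_def by (simp add: mult.commute[of _ "2 * max 0 _"])
  from has_derivative_compose[OF w this]
  have D: "((\<lambda>x. Hq (1 - (x - x0) \<bullet> (x - x0) / s^2)) has_derivative
     (\<lambda>v. (- (v \<bullet> (x - x0) + (x - x0) \<bullet> v) / s^2) * (2 * max 0 (1 - (x - x0) \<bullet> (x - x0) / s^2)))) (at x)" .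
  have E: "(\<lambda>v. (- (v \<bullet> (x - x0) + (x - x0) \<bullet> v) / s^2) * (2 * max 0 (1 - (x - x0) \<bullet> (x - x0) / s^2)))
     = (\<lambda>v. bumpg s x0 x \<bullet> v)"
  proof (rule ext)
    fix v
    have c: "v \<bullet> (x - x0) = (x - x0) \<bullet> v" by (rule inner_commute)
    have alg: "(-(a + a)/c)*(2*b) = (-4*b/c)*a" for a b c :: real by (simp add: field_simps)
    show "(- (v \<bullet> (x - x0) + (x - x0) \<bullet> v) / s^2) * (2 * max 0 (1 - (x - x0) \<bullet> (x - x0) / s^2))
     = bumpg s x0 x \<bullet> v"
      unfolding c bumpg_def inner_scaleR_left alg ..
  qed
  show ?thesis using D unfolding E bump_def[abs_def] .
qed

lemma bump_cont: "s > 0 \<Longrightarrow> continuous_on UNIV (bump s x0)"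
  using bump_deriv by (meson continuous_at_imp_continuous_on has_derivative_continuous)

lemma bumpg_cont: "s > 0 \<Longrightarrow> continuous_on UNIV (bumpg s x0)"
  unfolding bumpg_def by (intro continuous_intros) auto

lemma bump_out:
  assumes "s > 0" "norm (x - x0) \<ge> s"
  shows "bump s x0 x = 0" "bumpg s x0 x = 0"
proof -
  have "s^2 \<le> norm (x - x0)^2" using assms by (intro power_mono) auto
  then have "(x - x0) \<bullet> (x - x0) \<ge> s^2" by (simp add: power2_norm_eq_inner)
  then have "1 - (x - x0) \<bullet> (x - x0) / s^2 \<le> 0" using assms by (simp add: field_simps)
  then show "bump s x0 x = 0" "bumpg s x0 x = 0" by (auto simp: bump_def bumpg_def Hq_def max_def)
qed

lemma bumpg_bound:
  assumes "s > 0"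
  shows "norm (bumpg s x0 x) \<le> 4 / s"
proof (cases "norm (x - x0) \<ge> s")
  case True then show ?thesis using bump_out[OF assms True] assms by simp
next
  case False
  have ip: "(x - x0) \<bullet> (x - x0) \<ge> 0" by simp
  have m: "max 0 (1 - (x - x0) \<bullet> (x - x0) / s^2) \<le> 1" using ip assms by (simp add: field_simps)
  have "norm (bumpg s x0 x) = 4 * max 0 (1 - (x - x0) \<bullet> (x - x0) / s^2) / s^2 * norm (x - x0)"
    by (simp add: bumpg_def)
  also have "\<dots> \<le> 4 * 1 / s^2 * s"
    using False m assms by (intro mult_mono divide_right_mono mult_left_mono) auto
  also have "\<dots> = 4 / s" using assms by (simp add: power2_eq_square)
  finally show ?thesis .
qed

lemma bump_in:
  assumes "s > 0" "norm (x - x0) \<le> s / 2"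
  shows "bump s x0 x \<ge> 1/2"
proof -
  have "norm (x - x0)^2 \<le> (s/2)^2" using assms by (intro power_mono) auto
  then have "(x - x0) \<bullet> (x - x0) \<le> (s/2)^2" by (simp add: power2_norm_eq_inner)
  then have w: "1 - (x - x0) \<bullet> (x - x0) / s^2 \<ge> 3/4" using assms by (simp add: field_simps power2_eq_square)
  define w' where "w' = 1 - (x - x0) \<bullet> (x - x0) / s^2"
  have "bump s x0 x = w'^2" using w unfolding bump_def Hq_def w'_def by simp
  moreover have "(3/4)^2 \<le> w'^2" using w unfolding w'_def by (intro power_mono) auto
  ultimately show ?thesis by (simp add: power2_eq_square)
qed

lemma cont_supp_int:
  fixes F :: "'a::euclidean_space \<Rightarrow> real"
  assumes "continuous_on UNIV F" "\<And>x. R < norm x \<Longrightarrow> F x = 0"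
  shows "integrable lborel F"
proof -
  have eqf: "(\<lambda>x. indicator (cball 0 R) x *\<^sub>R F x) = F"
    using assms(2) by (auto simp: fun_eq_iff indicator_def)
  have "integrable lborel (\<lambda>x. indicator (cball 0 R) x *\<^sub>R F x)"
    by (rule borel_integrable_compact) (auto intro: continuous_on_subset[OF assms(1)])
  then show ?thesis unfolding eqf .
qed

lemma cont_loc_int:
  fixes F :: "'a::euclidean_space \<Rightarrow> real"
  assumes "continuous_on UNIV F"
  shows "loc_integrable G F"
  unfolding loc_integrable_def
proof (intro allI impI)
  fix K :: "'a set" assume K: "compact K \<and> K \<subseteq> G"
  have "integrable lborel (\<lambda>x. indicator K x *\<^sub>R F x)"
    by (rule borel_integrable_compact) (use K in \<open>auto intro: continuous_on_subset[OF assms(1)]\<close>)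
  then have "integrable lebesgue (\<lambda>x. indicator K x *\<^sub>R F x)"
    by (subst integrable_completion) (auto dest: borel_measurable_integrable)
  then show "set_integrable lebesgue K F" by (simp add: set_integrable_def)
qed

lemma deriv_zero_open:
  assumes "(f has_derivative f') (at x)" "open S" "x \<in> S" "\<And>y. y \<in> S \<Longrightarrow> f y = 0"
  shows "f' = (\<lambda>_. 0)"
proof -
  have "((\<lambda>_. 0) has_derivative f') (at x)"
    by (rule has_derivative_transform_within_open[OF assms(1-3)]) (use assms(4) in auto)
  then show ?thesis using has_derivative_unique has_derivative_const by blast
qed

lemma lebesgue_integral_eq_lborel:
  fixes F :: "'a::euclidean_space \<Rightarrow> real"
  assumes "continuous_on UNIV F" "\<And>x. x \<notin> G \<Longrightarrow> F x = 0"
  shows "(LINT x:G|lebesgue. F x) = integral\<^sup>L lborel F"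
proof -
  have "(\<lambda>x. indicator G x *\<^sub>R F x) = F" using assms(2) by (auto simp: fun_eq_iff indicator_def)
  then have "(LINT x:G|lebesgue. F x) = integral\<^sup>L lebesgue F" by (simp add: set_lebesgue_integral_def)
  also have "\<dots> = integral\<^sup>L lborel F"
    by (rule integral_completion) (use assms(1) borel_measurable_continuous_onI in simp)
  finally show ?thesis .
qed

lemma bump_weak_gradient:
  fixes x0 :: "'a::euclidean_space"
  assumes s: "s > 0"
  shows "weak_gradient G (bump s x0) (bumpg s x0)"
  unfolding weak_gradient_def
proof (intro conjI ballI allI impI)
  fix i :: 'a assume "i \<in> Basis"
  show "loc_integrable G (\<lambda>x. bumpg s x0 x \<bullet> i)"
    by (rule cont_loc_int) (intro continuous_intros bumpg_cont[OF s])
next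
  fix \<psi> :: "'a \<Rightarrow> real" and i :: 'a
  assume asm: "test_fun G \<psi> \<and> i \<in> Basis"
  then have i: "i \<in> Basis" and sm: "smooth_fun \<psi>" and cpt: "compact (closure {x. \<psi> x \<noteq> 0})"
    and sub: "closure {x. \<psi> x \<noteq> 0} \<subseteq> G" by (auto simp: test_fun_def)
  define T where "T = closure {x. \<psi> x \<noteq> 0}"
  define \<psi>' where "\<psi>' x = frechet_derivative \<psi> (at x)" for x
  from sm have "Ck (Suc 0) \<psi>" unfolding smooth_fun_def by blast
  then have dif: "\<And>x. \<psi> differentiable (at x)" and cd: "continuous_on UNIV (\<lambda>x. \<psi>' x i)"
    using i unfolding \<psi>'_def Ck.simps by blast+
  have der: "(\<psi> has_derivative \<psi>' x) (at x)" for x unfolding \<psi>'_def using dif[of x] frechet_derivative_works by blast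
  have cpsi: "continuous_on UNIV \<psi>"
    using der by (meson continuous_at_imp_continuous_on has_derivative_continuous)
  have psi0: "\<psi> x = 0" if "x \<notin> T" for x using that closure_subset[of "{x. \<psi> x \<noteq> 0}"] unfolding T_def by blast
  have oT: "open (- T)" unfolding T_def by (rule open_Compl) (rule closed_closure)
  have dpsi0: "\<psi>' x = (\<lambda>_. 0)" if "x \<notin> T" for x
    by (rule deriv_zero_open[OF der oT]) (use that psi0 in simp_all)
  from compact_imp_bounded[OF cpt] obtain a where a: "\<forall>x\<in>T. norm x \<le> a"
    unfolding T_def bounded_iff by blast
  define R where "R = max a 0"
  have R: "0 \<le> R" "T \<subseteq> cball 0 R" using a unfolding R_def by auto
  have outT: "x \<notin> T" if "R < norm x" for x using R that by auto
  define f where "f x = bump s x0 x * \<psi> x" for x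
  have fder: "(f has_derivative (\<lambda>v. bump s x0 x * \<psi>' x v + (bumpg s x0 x \<bullet> v) * \<psi> x)) (at x)" for x
    unfolding f_def[abs_def] by (rule has_derivative_mult[OF bump_deriv[OF s] der])
  have ni: "norm i = 1" using i by simp
  have c1: "continuous_on UNIV (\<lambda>x. bump s x0 x * \<psi>' x i)"
    by (intro continuous_intros bump_cont[OF s] cd)
  have c2: "continuous_on UNIV (\<lambda>x. (bumpg s x0 x \<bullet> i) * \<psi> x)"
    by (intro continuous_intros bumpg_cont[OF s] cpsi)
  have "integral\<^sup>L lborel (\<lambda>x. bump s x0 x * \<psi>' x i + (bumpg s x0 x \<bullet> i) * \<psi> x) = 0"
  proof (rule ibp_zero[OF fder _ _ R(1) ni])
    show "continuous_on UNIV (\<lambda>x. bump s x0 x * \<psi>' x i + (bumpg s x0 x \<bullet> i) * \<psi> x)"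
      by (rule continuous_on_add[OF c1 c2])
    show "\<And>x. R < norm x \<Longrightarrow> f x = 0" using outT psi0 by (simp add: f_def)
  qed
  moreover have i1: "integrable lborel (\<lambda>x. bump s x0 x * \<psi>' x i)"
    by (rule cont_supp_int[OF c1, of R]) (use outT dpsi0 in auto)
  moreover have i2: "integrable lborel (\<lambda>x. (bumpg s x0 x \<bullet> i) * \<psi> x)"
    by (rule cont_supp_int[OF c2, of R]) (use outT psi0 in auto)
  ultimately have sum0: "integral\<^sup>L lborel (\<lambda>x. bump s x0 x * \<psi>' x i) + integral\<^sup>L lborel (\<lambda>x. (bumpg s x0 x \<bullet> i) * \<psi> x) = 0"
    by simp
  have z1: "bump s x0 x * \<psi>' x i = 0" if "x \<notin> G" for x
  proof -
    have "x \<notin> T" using sub that unfolding T_def by blast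
    then show ?thesis using dpsi0[of x] by simp
  qed
  have z2: "(bumpg s x0 x \<bullet> i) * \<psi> x = 0" if "x \<notin> G" for x
  proof -
    have "x \<notin> T" using sub that unfolding T_def by blast
    then show ?thesis using psi0[of x] by simp
  qed
  have e1: "(LINT x:G|lebesgue. bump s x0 x * \<psi>' x i) = integral\<^sup>L lborel (\<lambda>x. bump s x0 x * \<psi>' x i)"
    by (rule lebesgue_integral_eq_lborel[OF c1]) (rule z1)
  have e2: "(LINT x:G|lebesgue. (bumpg s x0 x \<bullet> i) * \<psi> x) = integral\<^sup>L lborel (\<lambda>x. (bumpg s x0 x \<bullet> i) * \<psi> x)"
    by (rule lebesgue_integral_eq_lborel[OF c2]) (rule z2)
  show "(LINT x:G|lebesgue. bump s x0 x * frechet_derivative \<psi> (at x) i) =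
          - (LINT x:G|lebesgue. (bumpg s x0 x \<bullet> i) * \<psi> x)"
    using e1 e2 sum0 unfolding \<psi>'_def by linarith
qed

lemma Lnorm_nonneg: "0 \<le> Lnorm q S F"
  unfolding Lnorm_def Let_def by auto

lemma emeasure_lebesgue_cball:
  fixes c :: "'a::euclidean_space"
  assumes "0 \<le> r"
  shows "emeasure lebesgue (cball c r) = ennreal (unit_ball_vol (DIM('a)) * r ^ DIM('a))"
  using emeasure_cball[OF assms, of c] by simp

lemma Lnorm_le:
  fixes F :: "'a::euclidean_space \<Rightarrow> real"
  assumes p: "p > 0" and A: "A \<in> sets lebesgue" and mA: "emeasure lebesgue A = ennreal V"
    and V: "0 \<le> V" and c: "0 \<le> c"
    and bd: "\<And>x. x \<in> S \<Longrightarrow> \<bar>F x\<bar> powr p \<le> c * indicator A x"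
  shows "Lnorm p S F \<le> ereal ((c * V) powr (1/p))"
proof -
  let ?I = "\<integral>\<^sup>+x\<in>S. ennreal (\<bar>F x\<bar> powr p) \<partial>lebesgue"
  have pw: "ennreal (\<bar>F x\<bar> powr p) * indicator S x \<le> ennreal c * indicator A x" for x
  proof (cases "x \<in> S")
    case True
    then show ?thesis using bd[of x] by (cases "x \<in> A") (auto simp: indicator_def intro: ennreal_leI)
  qed simp
  have "?I \<le> (\<integral>\<^sup>+x. ennreal c * indicator A x \<partial>lebesgue)"
    by (intro nn_integral_mono pw)
  also have "\<dots> = ennreal c * emeasure lebesgue A" by (rule nn_integral_cmult_indicator[OF A])
  also have "\<dots> = ennreal (c * V)" using mA c V by (simp add: ennreal_mult)
  finally have I: "?I \<le> ennreal (c*V)" .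
  have fin: "?I \<noteq> \<infinity>"
  proof
    assume "?I = \<infinity>"
    with I have "\<infinity> \<le> ennreal (c*V)" by simp
    then have "top \<le> ennreal (c*V)" by simp
    then show False by (simp add: top.extremum_unique)
  qed
  have e: "enn2real ?I \<le> c * V" using enn2real_mono[OF I] c V by simp
  have "Lnorm p S F = ereal (enn2real ?I powr (1/p))" unfolding Lnorm_def Let_def using fin by simp
  also have "\<dots> \<le> ereal ((c*V) powr (1/p))" using e p by (simp add: powr_mono2)
  finally show ?thesis .
qed

lemma Lnorm_ge:
  fixes F :: "'a::euclidean_space \<Rightarrow> real"
  assumes q: "q > 0" and A: "A \<in> sets lebesgue" and mA: "emeasure lebesgue A = ennreal V"
    and V: "0 \<le> V" and c: "0 \<le> c" and AS: "A \<subseteq> S"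
    and bd: "\<And>x. x \<in> A \<Longrightarrow> c \<le> \<bar>F x\<bar> powr q"
  shows "ereal ((c * V) powr (1/q)) \<le> Lnorm q S F"
proof -
  let ?I = "\<integral>\<^sup>+x\<in>S. ennreal (\<bar>F x\<bar> powr q) \<partial>lebesgue"
  have pw: "ennreal c * indicator A x \<le> ennreal (\<bar>F x\<bar> powr q) * indicator S x" for x
  proof (cases "x \<in> A")
    case True
    then show ?thesis using bd[of x] AS by (auto simp: indicator_def)
  qed simp
  have "ennreal (c * V) = ennreal c * emeasure lebesgue A" using mA c V by (simp add: ennreal_mult)
  also have "\<dots> = (\<integral>\<^sup>+x. ennreal c * indicator A x \<partial>lebesgue)" by (rule nn_integral_cmult_indicator[OF A, symmetric])
  also have "\<dots> \<le> ?I" by (intro nn_integral_mono pw)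
  finally have I: "ennreal (c * V) \<le> ?I" .
  show ?thesis
  proof (cases "?I = \<infinity>")
    case True then show ?thesis unfolding Lnorm_def Let_def by simp
  next
    case False
    then have lt: "?I < top" by (simp add: top.not_eq_extremum)
    have e: "c * V \<le> enn2real ?I" using enn2real_mono[OF I lt] c V by simp
    have "ereal ((c*V) powr (1/q)) \<le> ereal (enn2real ?I powr (1/q))" using e q c V by (simp add: powr_mono2)
    also have "\<dots> = Lnorm q S F" unfolding Lnorm_def Let_def using False by simp
    finally show ?thesis .
  qed
qed

lemma bump_L1p:
  fixes x0 :: "'a::euclidean_space"
  assumes s: "s > 0" and p: "p \<ge> 1"
  shows "L1p p G (bump s x0) (bumpg s x0)"
    and "Lnorm p G (\<lambda>x. norm (bumpg s x0 x)) \<le>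
          ereal (((4/s) powr p * (unit_ball_vol (DIM('a)) * s ^ DIM('a))) powr (1/p))"
proof -
  show le: "Lnorm p G (\<lambda>x. norm (bumpg s x0 x)) \<le>
          ereal (((4/s) powr p * (unit_ball_vol (DIM('a)) * s ^ DIM('a))) powr (1/p))"
  proof (rule Lnorm_le)
    show "cball x0 s \<in> sets lebesgue" by simp
    show "emeasure lebesgue (cball x0 s) = ennreal (unit_ball_vol (DIM('a)) * s ^ DIM('a))"
      by (rule emeasure_lebesgue_cball) (use s in simp)
    show "\<bar>norm (bumpg s x0 x)\<bar> powr p \<le> (4/s) powr p * indicator (cball x0 s) x" for x
    proof (cases "x \<in> cball x0 s")
      case True
      have "\<bar>norm (bumpg s x0 x)\<bar> powr p \<le> (4/s) powr p"
        using bumpg_bound[OF s, of x0 x] p by (intro powr_mono2) auto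
      then show ?thesis using True by simp
    next
      case False
      then have "norm (x - x0) \<ge> s" by (simp add: dist_norm norm_minus_commute)
      then show ?thesis using bump_out[OF s] False by simp
    qed
  next
    show "0 < p" using p by simp
    show "0 \<le> unit_ball_vol (DIM('a)) * s ^ DIM('a)" using s by simp
    show "0 \<le> (4/s) powr p" by simp
  qed
  have "bumpg s x0 \<in> borel_measurable borel" by (rule borel_measurable_continuous_onI[OF bumpg_cont[OF s]])
  then have "bumpg s x0 \<in> borel_measurable lebesgue" by (intro measurable_completion) simp
  then have meas: "bumpg s x0 \<in> borel_measurable (restrict_space lebesgue G)" by (rule measurable_restrict_space1)
  show "L1p p G (bump s x0) (bumpg s x0)"
    unfolding L1p_def
  proof (intro conjI)
    show "Lnorm p G (\<lambda>x. norm (bumpg s x0 x)) < \<infinity>" using le by (rule le_less_trans) simp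
  qed (use cont_loc_int[OF bump_cont[OF s]] bump_weak_gradient[OF s] meas in auto)
qed

lemma cball_in_orthant:
  fixes c :: "'a::euclidean_space"
  assumes "\<forall>i\<in>Basis. r < c \<bullet> i"
  shows "cball c r \<subseteq> {x. \<forall>i\<in>Basis. 0 < x \<bullet> i}"
proof
  fix y assume y: "y \<in> cball c r"
  show "y \<in> {x. \<forall>i\<in>Basis. 0 < x \<bullet> i}"
  proof (simp, intro ballI)
    fix i :: 'a assume i: "i \<in> Basis"
    have "\<bar>(y - c) \<bullet> i\<bar> \<le> norm (y - c)" by (rule Basis_le_norm[OF i])
    also have "\<dots> \<le> r" using y by (simp add: dist_norm norm_minus_commute)
    finally show "0 < y \<bullet> i" using assms i by (auto simp: inner_diff_left)
  qed
qed

lemma low_simp: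
  fixes q s V :: real and n :: nat
  assumes "q > 0" "s > 0" "V > 0"
  shows "((1/4) powr q * (V * (s/2)^n)) powr (1/q) = ((1/4) powr q * V / 2^n) powr (1/q) * s powr (n/q)"
proof -
  have e1: "(1/4) powr q * (V * (s/2)^n) = ((1/4) powr q * V / 2^n) * s powr n"
    using assms by (simp add: powr_realpow power_divide)
  have "(((1/4) powr q * V / 2^n) * s powr n) powr (1/q) = ((1/4) powr q * V / 2^n) powr (1/q) * (s powr n) powr (1/q)"
    by (rule powr_mult)
  then have "((1/4) powr q * (V * (s/2)^n)) powr (1/q) = ((1/4) powr q * V / 2^n) powr (1/q) * (s powr n) powr (1/q)"
    unfolding e1 .
  also have "(s powr n) powr (1/q) = s powr (n/q)" by (simp add: powr_powr)
  finally show ?thesis .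
qed

lemma up_simp:
  fixes p s V :: real and n :: nat
  assumes "p > 0" "s > 0" "V > 0"
  shows "((4/s) powr p * (V * s^n)) powr (1/p) = (4 powr p * V) powr (1/p) * s powr ((n - p)/p)"
proof -
  have "(4/s) powr p * (V * s^n) = (4 powr p * V) * (s powr n / s powr p)"
    using assms by (simp add: powr_realpow powr_divide)
  also have "s powr n / s powr p = s powr (n - p)" by (simp add: powr_diff)
  finally have e1: "(4/s) powr p * (V * s^n) = (4 powr p * V) * s powr (n - p)" .
  have "((4 powr p * V) * s powr (n - p)) powr (1/p) = (4 powr p * V) powr (1/p) * (s powr (n - p)) powr (1/p)"
    by (rule powr_mult)
  then have "((4/s) powr p * (V * s^n)) powr (1/p) = (4 powr p * V) powr (1/p) * (s powr (n - p)) powr (1/p)"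
    unfolding e1 .
  also have "(s powr (n - p)) powr (1/p) = s powr ((n - p)/p)" by (simp add: powr_powr)
  finally show ?thesis .
qed

lemma q_value:
  fixes G :: "'a::euclidean_space set" and p q C :: real and ee :: 'a
  assumes p1: "1 \<le> p" and pn: "p < real DIM('a)" and q1: "1 \<le> q" and ee: "ee \<in> Basis"
    and OG: "{x. \<forall>i\<in>Basis. 0 < x \<bullet> i} \<subseteq> G"
    and hyp: "\<forall>u g. L1p p G u g \<longrightarrow>
            (INF b. Lnorm q G (\<lambda>x. u x - b)) \<le> ereal C * Lnorm p G (\<lambda>x. norm (g x))"
  shows "q = real DIM('a) * p / (real DIM('a) - p)"
proof -
  define n where "n = DIM('a)"
  define V where "V = unit_ball_vol (real n)"
  have V: "V > 0" unfolding V_def by simp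
  define D where "D = max C 0"
  define K1 where "K1 = ((1/4) powr q * V / 2^n) powr (1/q)"
  define K2 where "K2 = (4 powr p * V) powr (1/p)"
  have K1: "K1 > 0" unfolding K1_def using V by simp
  have K2: "K2 > 0" unfolding K2_def using V by simp
  define a :: 'a where "a = (\<Sum>i\<in>Basis. 4 *\<^sub>R i)"
  have a: "a \<bullet> i = 4" if "i \<in> Basis" for i
    using that by (simp add: a_def inner_sum_left inner_Basis if_distrib cong: if_cong)
  have main: "K1 * s powr (n/q) \<le> D * K2 * s powr ((n - p)/p)" if s: "s > 0" for s
  proof -
    define x0 where "x0 = s *\<^sub>R a"
    define x1 where "x1 = x0 + scaleR (2 * s) ee"
    define u where "u = bump s x0"
    define g where "g = bumpg s x0"
    have L: "L1p p G u g" and Lup: "Lnorm p G (\<lambda>x. norm (g x)) \<le>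
          ereal (((4/s) powr p * (V * s ^ n)) powr (1/p))"
      using bump_L1p[OF s p1, of G x0] unfolding u_def g_def V_def n_def by auto
    have x0i: "x0 \<bullet> i = 4 * s" if "i \<in> Basis" for i using a[OF that] by (simp add: x0_def)
    have x1i: "x1 \<bullet> i \<ge> 4 * s" if "i \<in> Basis" for i
      using x0i[OF that] ee that s by (auto simp: x1_def inner_add_left inner_Basis)
    have A0: "cball x0 (s/2) \<subseteq> G"
      using cball_in_orthant[of "s/2" x0] x0i s OG by auto
    have A1: "cball x1 (s/2) \<subseteq> G"
    proof -
      have "\<forall>i\<in>Basis. s/2 < x1 \<bullet> i"
      proof
        fix i :: 'a assume "i \<in> Basis"
        from x1i[OF this] s show "s/2 < x1 \<bullet> i" by simp
      qed
      then show ?thesis using cball_in_orthant[of "s/2" x1] OG by auto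
    qed
    have mA: "emeasure lebesgue (cball c (s/2)) = ennreal (V * (s/2)^n)" for c :: 'a
      using emeasure_lebesgue_cball[of "s/2" c] s unfolding V_def n_def by simp
    have q0: "q > 0" using q1 by simp
    have lowb: "ereal (((1/4) powr q * (V * (s/2)^n)) powr (1/q)) \<le> Lnorm q G (\<lambda>x. u x - b)" for b
    proof (cases "b \<le> 1/4")
      case True
      show ?thesis
      proof (rule Lnorm_ge[OF q0 _ mA _ _ A0])
        fix x assume x: "x \<in> cball x0 (s/2)"
        have "u x \<ge> 1/2" unfolding u_def
          by (rule bump_in[OF s]) (use x in \<open>simp add: dist_norm norm_minus_commute\<close>)
        then have "1/4 \<le> \<bar>u x - b\<bar>" using True by simp
        then show "(1/4) powr q \<le> \<bar>u x - b\<bar> powr q" using q0 by (intro powr_mono2) auto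
      qed (use V s in auto)
    next
      case False
      show ?thesis
      proof (rule Lnorm_ge[OF q0 _ mA _ _ A1])
        fix x assume x: "x \<in> cball x1 (s/2)"
        have "norm (x1 - x0) = 2 * s" using s ee by (simp add: x1_def)
        moreover have "norm (x - x1) \<le> s/2" using x by (simp add: dist_norm norm_minus_commute)
        moreover have "norm (x1 - x0) \<le> norm (x - x0) + norm (x - x1)"
          using norm_triangle_ineq[of "x - x0" "x1 - x"] by (simp add: norm_minus_commute)
        ultimately have "norm (x - x0) \<ge> s" using s by linarith
        then have "u x = 0" unfolding u_def by (rule bump_out[OF s])
        then have "1/4 \<le> \<bar>u x - b\<bar>" using False by simp
        then show "(1/4) powr q \<le> \<bar>u x - b\<bar> powr q" using q0 by (intro powr_mono2) auto
      qed (use V s in auto)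
    qed
    have "ereal (((1/4) powr q * (V * (s/2)^n)) powr (1/q)) \<le> (INF b. Lnorm q G (\<lambda>x. u x - b))"
      by (rule INF_greatest) (rule lowb)
    also have "\<dots> \<le> ereal C * Lnorm p G (\<lambda>x. norm (g x))" using hyp L by blast
    finally have ineq: "ereal (((1/4) powr q * (V * (s/2)^n)) powr (1/q)) \<le> ereal C * Lnorm p G (\<lambda>x. norm (g x))" .
    have nn: "0 \<le> Lnorm p G (\<lambda>x. norm (g x))" by (rule Lnorm_nonneg)
    obtain y where y: "Lnorm p G (\<lambda>x. norm (g x)) = ereal y"
      using nn Lup by (cases "Lnorm p G (\<lambda>x. norm (g x))") auto
    have y0: "0 \<le> y" and yup: "y \<le> ((4/s) powr p * (V * s ^ n)) powr (1/p)"
      using nn Lup y by auto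
    have "((1/4) powr q * (V * (s/2)^n)) powr (1/q) \<le> C * y" using ineq y by simp
    also have "\<dots> \<le> D * y" using y0 unfolding D_def by (simp add: mult_right_mono)
    also have "\<dots> \<le> D * (((4/s) powr p * (V * s ^ n)) powr (1/p))"
      using yup unfolding D_def by (simp add: mult_left_mono)
    finally show ?thesis
      using low_simp[OF q0 s V, of n] up_simp[of p s V n] p1 s V unfolding K1_def K2_def
      by (simp add: mult.assoc)
  qed
  have "\<forall>s>0. s powr (n/q - (n - p)/p) \<le> D * K2 / K1"
  proof (intro allI impI)
    fix s :: real assume s: "s > 0"
    have "s powr (n/q - (n - p)/p) = s powr (n/q) / s powr ((n - p)/p)" by (simp add: powr_diff)
    also have "\<dots> \<le> D * K2 / K1"
      using main[OF s] K1 s by (simp add: divide_simps mult.commute mult.left_commute)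
    finally show "s powr (n/q - (n - p)/p) \<le> D * K2 / K1" .
  qed
  then have "n/q - (n - p)/p = 0" by (rule expo_zero)
  then have "n/q = (n - p)/p" by simp
  moreover have "n - p > 0" using pn unfolding n_def by simp
  ultimately show ?thesis using p1 q1 unfolding n_def by (simp add: field_simps)
qed

lemma orthant_open: "open {x::'a::euclidean_space. \<forall>i\<in>Basis. 0 < x \<bullet> i}"
proof -
  have "{x::'a. \<forall>i\<in>Basis. 0 < x \<bullet> i} = (\<Inter>i\<in>Basis. {x. 0 < x \<bullet> i})" by auto
  moreover have "open (\<Inter>i\<in>Basis. {x::'a. 0 < x \<bullet> i})"
    by (intro open_INT finite_Basis ballI open_halfspace_component_gt)
  ultimately show ?thesis by simp
qed

lemma orth_sub: "{x::'a::euclidean_space. \<forall>i\<in>Basis. 0 < x \<bullet> i} \<subseteq> interior ({x. \<forall>i\<in>Basis. 0 < x \<bullet> i} \<union> X)"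
  by (rule interior_maximal) (auto intro: orthant_open)

theorem theorem6p2:
  fixes \<phi> :: "real \<Rightarrow> real" and p q C m :: real
    and G :: "'a::euclidean_space set" and e1 e2 :: 'a
  assumes "DIM('a) \<ge> 2"
    and "1 \<le> p" and "p < real DIM('a)"
    and "admissible_phi \<phi>"
    and "((\<lambda>t. t / \<phi> t) \<longlongrightarrow> m) (at_right 0)"
    and "e1 \<in> Basis" and "e2 \<in> Basis" and "e1 \<noteq> e2"
    and "mushroom_domain e1 e2 \<phi> G"
    and "1 \<le> q"
    and "\<forall>u g. L1p p G u g \<longrightarrow>
            (INF b. Lnorm q G (\<lambda>x. u x - b)) \<le> ereal C * Lnorm p G (\<lambda>x. norm (g x))"
  shows "q = real DIM('a) * p / (real DIM('a) - p) \<and>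
         (\<exists>t0>0. \<exists>c1 c2. 0 < c1 \<and> c1 \<le> c2 \<and>
            (\<forall>t\<in>{0<..t0}. c1 * t \<le> \<phi> t \<and> \<phi> t \<le> c2 * t))"
proof
  from assms(9) obtain r :: "nat \<Rightarrow> real" where
    r: "\<forall>k. 0 < r k" "r \<longlonglongrightarrow> 0" "\<forall>k. \<phi> (r k) \<le> r k"
    unfolding mushroom_domain_def by blast
  have OG: "{x. \<forall>i\<in>Basis. 0 < x \<bullet> i} \<subseteq> G"
    using assms(9) unfolding mushroom_domain_def by (elim exE conjE) (simp only: orth_sub)
  show "q = real DIM('a) * p / (real DIM('a) - p)"
    by (rule q_value[OF assms(2,3,10,6) OG assms(11)])
  show "\<exists>t0>0. \<exists>c1 c2. 0 < c1 \<and> c1 \<le> c2 \<and> (\<forall>t\<in>{0<..t0}. c1 * t \<le> \<phi> t \<and> \<phi> t \<le> c2 * t)"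
    by (rule phi_approx[OF assms(4,5) r])
qed

end
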